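(* Let $I$ be a BPPS instance with $d$ scenarios in which every item has size $s_i\ge\varepsilon^2$, and let $\mathcal{P}^0=\{\{i\}: i\in\bigcup_{t\in\mathcal{T}}G_t^0\}$ be the packing placing each item of the groups $G_t^0$ in its own bin. Then $\mathrm{val}_{BPPS}(\mathcal{P}^0)\le\varepsilon\,\mathrm{OPT}(I)+2^d$.
   Context: A BPPS instance has $d$ scenarios, items $\mathcal{I}$, each item $i$ with size $s_i$ and type $\mathcal{K}_i\subseteq\{1,\dots,d\}$, and bins of capacity $1$; $S_k=\{i:k\in\mathcal{K}_i\}$. A packing is a partition $\mathcal{P}$ of (a set of) items with $\sum_{i\in B\cap S_k}s_i\le1$ for all $B\in\mathcal{P}$ and all $k$; its value is $\mathrm{val}_{BPPS}(\mathcal{P})=\max_k|\{B\in\mathcal{P}:B\cap S_k\ne\emptyset\}|$; $\mathrm{OPT}(I)$ is the minimum value of a packing of all items. $\mathcal{T}$ is the set of all types (all subsets of $\{1,\dots,d\}$). Here $\varepsilon\in(0,1/4]$ with $1/\varepsilon$ an integer, and $m=2^d/\varepsilon^3-1$. For each type $t$, $\mathcal{I}_t$ (items of type $t$) is sorted in nonincreasing order of size and partitioned into $m+1$ groups of consecutive items $G_t^0,\dots,G_t^m$, where each of the first $m$ groups has $\lceil|\mathcal{I}_t|/(m+1)\rceil$ items and the last has at most that many; so $G_t^0$ consists of the $\lceil|\mathcal{I}_t|/(m+1)\rceil$ largest items of type $t$. *)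

theory Defs
  imports Main "HOL-Library.Discrete_Functions"
begin

definition bpps_instance :: "nat \<Rightarrow> 'a set \<Rightarrow> ('a \<Rightarrow> real) \<Rightarrow> ('a \<Rightarrow> nat set) \<Rightarrow> bool" where
  "bpps_instance d I s K \<longleftrightarrow> finite I \<and> (\<forall>i\<in>I. 0 < s i \<and> s i \<le> 1 \<and> K i \<subseteq> {1..d})"

definition scen_items :: "'a set \<Rightarrow> ('a \<Rightarrow> nat set) \<Rightarrow> nat \<Rightarrow> 'a set" where
  "scen_items I K k = {i\<in>I. k \<in> K i}"

definition is_packing :: "nat \<Rightarrow> 'a set \<Rightarrow> ('a \<Rightarrow> real) \<Rightarrow> ('a \<Rightarrow> nat set) \<Rightarrow> 'a set \<Rightarrow> 'a set set \<Rightarrow> bool" where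
  "is_packing d I s K X P \<longleftrightarrow>
     (\<forall>B\<in>P. B \<noteq> {}) \<and> (\<forall>B\<in>P. \<forall>B'\<in>P. B \<noteq> B' \<longrightarrow> B \<inter> B' = {}) \<and> \<Union>P = X \<and>
     (\<forall>B\<in>P. \<forall>k\<in>{1..d}. sum s (B \<inter> scen_items I K k) \<le> 1)"

definition val_bpps :: "nat \<Rightarrow> 'a set \<Rightarrow> ('a \<Rightarrow> nat set) \<Rightarrow> 'a set set \<Rightarrow> nat" where
  "val_bpps d I K P = Max (insert 0 ((\<lambda>k. card {B\<in>P. B \<inter> scen_items I K k \<noteq> {}}) ` {1..d}))"

definition OPT_bpps :: "nat \<Rightarrow> 'a set \<Rightarrow> ('a \<Rightarrow> real) \<Rightarrow> ('a \<Rightarrow> nat set) \<Rightarrow> nat" where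
  "OPT_bpps d I s K = (LEAST v. \<exists>P. is_packing d I s K I P \<and> val_bpps d I K P = v)"

definition items_of_type :: "'a set \<Rightarrow> ('a \<Rightarrow> nat set) \<Rightarrow> nat set \<Rightarrow> 'a set" where
  "items_of_type I K t = {i\<in>I. K i = t}"

end

theory Submission
  imports Defs
begin

lemma sum_le_bins:
  assumes inst: "bpps_instance d I s K" and P: "is_packing d I s K I P"
  shows "sum s (scen_items I K k) \<le> real (card {B\<in>P. B \<inter> scen_items I K k \<noteq> {}})"
proof -
  let ?S = "scen_items I K k"
  let ?P' = "{B\<in>P. B \<inter> ?S \<noteq> {}}"
  have fI: "finite I" using inst by (simp add: bpps_instance_def)
  have UP: "\<Union>P = I" using P by (simp add: is_packing_def)
  have fP: "finite P" using fI UP by (metis finite_UnionD)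
  have fP': "finite ?P'" using fP by simp
  have SU: "?S = (\<Union>B\<in>?P'. B \<inter> ?S)"
    using UP by (auto simp: scen_items_def)
  have "sum s ?S = (\<Sum>B\<in>?P'. sum s (B \<inter> ?S))"
    apply (subst SU)
    apply (rule sum.UNION_disjoint)
    using fP' fI UP P by (auto simp: is_packing_def scen_items_def intro: finite_subset)
  also have "\<dots> \<le> (\<Sum>B\<in>?P'. 1)"
  proof (rule sum_mono)
    fix B assume "B \<in> ?P'"
    have "sum s (B \<inter> ?S) \<le> 1" if "k \<in> {1..d}" using P \<open>B \<in> ?P'\<close> that
      by (auto simp: is_packing_def)
    moreover have "B \<inter> ?S = {}" if "k \<notin> {1..d}"
    proof -
      have "\<forall>i\<in>I. K i \<subseteq> {1..d}" using inst by (simp add: bpps_instance_def)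
      then have "?S = {}" using that unfolding scen_items_def by blast
      then show ?thesis by simp
    qed
    ultimately show "sum s (B \<inter> ?S) \<le> 1" by (cases "k \<in> {1..d}") auto
  qed
  finally show ?thesis by simp
qed

lemma card_le_val:
  assumes "k \<in> {1..d}"
  shows "card {B\<in>P. B \<inter> scen_items I K k \<noteq> {}} \<le> val_bpps d I K P"
  unfolding val_bpps_def using assms by (intro Max_ge) auto

lemma OPT_exists:
  assumes inst: "bpps_instance d I s K"
  shows "\<exists>P. is_packing d I s K I P \<and> val_bpps d I K P = OPT_bpps d I s K"
proof -
  have "is_packing d I s K I ((\<lambda>i. {i}) ` I)"
    unfolding is_packing_def
  proof (intro conjI ballI)
    fix B k assume "B \<in> (\<lambda>i. {i}) ` I" "k \<in> {1..d}"
    then obtain i where i: "i \<in> I" "B = {i}" by auto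
    show "sum s (B \<inter> scen_items I K k) \<le> 1"
    proof (cases "i \<in> scen_items I K k")
      case True
      then have "B \<inter> scen_items I K k = {i}" using i by auto
      then show ?thesis using inst i by (simp add: bpps_instance_def)
    next
      case False
      then have "B \<inter> scen_items I K k = {}" using i by auto
      then show ?thesis by simp
    qed
  qed auto
  then have "\<exists>v P. is_packing d I s K I P \<and> val_bpps d I K P = v" by blast
  then show ?thesis unfolding OPT_bpps_def by (rule LeastI_ex)
qed

theorem lemma5:
  fixes d :: nat and I :: "'a set" and s :: "'a \<Rightarrow> real" and K :: "'a \<Rightarrow> nat set"
    and q :: nat and \<epsilon> :: real and G0 :: "nat set \<Rightarrow> 'a set"
  assumes inst: "bpps_instance d I s K"
    and eps: "\<epsilon> = 1 / real q" and q4: "q \<ge> 4"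
    and large: "\<forall>i\<in>I. s i \<ge> \<epsilon>^2"
    and G0_sub: "\<forall>t. t \<subseteq> {1..d} \<longrightarrow> G0 t \<subseteq> items_of_type I K t"
    and G0_card: "\<forall>t. t \<subseteq> {1..d} \<longrightarrow>
        card (G0 t) = nat \<lceil>real (card (items_of_type I K t)) / (2 ^ d / \<epsilon> ^ 3)\<rceil>"
    and G0_largest: "\<forall>t. t \<subseteq> {1..d} \<longrightarrow>
        (\<forall>i\<in>G0 t. \<forall>j\<in>items_of_type I K t - G0 t. s j \<le> s i)"
  shows "real (val_bpps d I K ((\<lambda>i. {i}) ` (\<Union>t\<in>Pow {1..d}. G0 t)))
           \<le> \<epsilon> * real (OPT_bpps d I s K) + 2 ^ d"
proof -
  have fI: "finite I" using inst by (simp add: bpps_instance_def)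
  have epos: "\<epsilon> > 0" using eps q4 by simp
  have ele: "\<epsilon> \<le> 1" using eps q4 by simp
  obtain P where P: "is_packing d I s K I P" "val_bpps d I K P = OPT_bpps d I s K"
    using OPT_exists[OF inst] by blast
  let ?U = "\<Union>t\<in>Pow {1..d}. G0 t"
  let ?P0 = "(\<lambda>i. {i}) ` ?U"
  have bound: "real (card {B\<in>?P0. B \<inter> scen_items I K k \<noteq> {}})
           \<le> \<epsilon> * real (OPT_bpps d I s K) + 2 ^ d" if k: "k \<in> {1..d}" for k
  proof -
    let ?S = "scen_items I K k"
    let ?T = "{t\<in>Pow {1..d}. k \<in> t}"
    have fT: "finite ?T" by simp
    have cT: "card ?T \<le> 2 ^ d"
    proof -
      have "card ?T \<le> card (Pow {1..d})" by (rule card_mono) auto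
      then show ?thesis by (simp add: card_Pow)
    qed
    have eq1: "{B\<in>?P0. B \<inter> ?S \<noteq> {}} = (\<lambda>i. {i}) ` (?U \<inter> ?S)" by auto
    have eq2: "?U \<inter> ?S = (\<Union>t\<in>?T. G0 t)"
    proof (intro equalityI subsetI)
      fix x assume "x \<in> ?U \<inter> ?S"
      then obtain t where t: "t \<in> Pow {1..d}" "x \<in> G0 t" and xS: "x \<in> ?S" by blast
      have "K x = t" using G0_sub t by (auto simp: items_of_type_def)
      then show "x \<in> (\<Union>t\<in>?T. G0 t)" using t xS by (auto simp: scen_items_def)
    next
      fix x assume "x \<in> (\<Union>t\<in>?T. G0 t)"
      then obtain t where t: "t \<in> Pow {1..d}" "k \<in> t" "x \<in> G0 t" by blast
      have "K x = t" "x \<in> I" using G0_sub t by (auto simp: items_of_type_def)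
      then show "x \<in> ?U \<inter> ?S" using t by (auto simp: scen_items_def)
    qed
    have c1: "card {B\<in>?P0. B \<inter> ?S \<noteq> {}} = card (\<Union>t\<in>?T. G0 t)"
      unfolding eq1 eq2 by (rule card_image) (simp add: inj_on_def)
    have c2: "card (\<Union>t\<in>?T. G0 t) \<le> (\<Sum>t\<in>?T. card (G0 t))"
      by (rule card_UN_le) simp
    have c3: "real (card (G0 t)) \<le> \<epsilon>^3 / 2^d * real (card (items_of_type I K t)) + 1"
      if "t \<in> ?T" for t
    proof -
      have "real (card (G0 t)) = real (nat \<lceil>real (card (items_of_type I K t)) / (2 ^ d / \<epsilon> ^ 3)\<rceil>)"
        using G0_card that by auto
      also have "\<dots> \<le> real (card (items_of_type I K t)) / (2 ^ d / \<epsilon> ^ 3) + 1"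
      proof -
        let ?x = "real (card (items_of_type I K t)) / (2 ^ d / \<epsilon> ^ 3)"
        have "?x \<ge> 0" using epos by simp
        then have "\<lceil>?x\<rceil> \<ge> 0" by simp
        then have "real (nat \<lceil>?x\<rceil>) = of_int \<lceil>?x\<rceil>" by simp
        also have "\<dots> \<le> ?x + 1" by (rule of_int_ceiling_le_add_one)
        finally show ?thesis .
      qed
      finally show ?thesis by (simp add: mult.commute)
    qed
    have sumT: "(\<Sum>t\<in>?T. card (items_of_type I K t)) = card ?S"
    proof -
      have "?S = (\<Union>t\<in>?T. items_of_type I K t)"
        using inst by (auto simp: items_of_type_def scen_items_def bpps_instance_def)
      moreover have "card (\<Union>t\<in>?T. items_of_type I K t) = (\<Sum>t\<in>?T. card (items_of_type I K t))"
        by (rule card_UN_disjoint) (use fI in \<open>auto simp: items_of_type_def\<close>)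
      ultimately show ?thesis by simp
    qed
    have "real (card {B\<in>?P0. B \<inter> ?S \<noteq> {}}) \<le> (\<Sum>t\<in>?T. real (card (G0 t)))"
    proof -
      have "real (card {B\<in>?P0. B \<inter> ?S \<noteq> {}}) \<le> real (\<Sum>t\<in>?T. card (G0 t))"
        using c1 c2 by (simp only: of_nat_le_iff)
      then show ?thesis by (simp only: of_nat_sum)
    qed
    also have "\<dots> \<le> (\<Sum>t\<in>?T. \<epsilon>^3 / 2^d * real (card (items_of_type I K t)) + 1)"
      by (rule sum_mono) (rule c3)
    also have "\<dots> = \<epsilon>^3 / 2^d * real (card ?S) + real (card ?T)"
    proof -
      let ?c = "\<epsilon>^3 / 2^d"
      have "(\<Sum>t\<in>?T. ?c * real (card (items_of_type I K t)) + 1)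
          = (\<Sum>t\<in>?T. ?c * real (card (items_of_type I K t))) + real (card ?T)"
        by (simp add: sum.distrib)
      also have "(\<Sum>t\<in>?T. ?c * real (card (items_of_type I K t)))
          = ?c * (\<Sum>t\<in>?T. real (card (items_of_type I K t)))"
        by (rule sum_distrib_left[symmetric])
      also have "(\<Sum>t\<in>?T. real (card (items_of_type I K t))) = real (card ?S)"
        using sumT by (metis of_nat_sum)
      finally show ?thesis .
    qed
    also have "\<dots> \<le> \<epsilon>^3 / 2^d * real (card ?S) + 2^d"
    proof -
      have "real (card ?T) \<le> real (2 ^ d)" using cT by (simp only: of_nat_le_iff)
      then show ?thesis by simp
    qed
    also have "\<epsilon>^3 / 2^d * real (card ?S) \<le> \<epsilon> * real (OPT_bpps d I s K)"
    proof -
      have sS: "\<epsilon>^2 * real (card ?S) \<le> sum s ?S"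
      proof -
        have "(\<Sum>i\<in>?S. \<epsilon>^2) \<le> sum s ?S"
          by (rule sum_mono) (use large in \<open>auto simp: scen_items_def\<close>)
        then show ?thesis by (simp add: mult.commute)
      qed
      have "sum s ?S \<le> real (card {B\<in>P. B \<inter> ?S \<noteq> {}})"
        by (rule sum_le_bins[OF inst P(1)])
      also have "\<dots> \<le> real (OPT_bpps d I s K)"
        using card_le_val[OF k, of P I K] P(2) by simp
      finally have o: "\<epsilon>^2 * real (card ?S) \<le> real (OPT_bpps d I s K)" using sS by simp
      have "\<epsilon>^3 / 2^d * real (card ?S) \<le> \<epsilon>^3 * real (card ?S)"
        using epos by (intro mult_right_mono) (auto simp: field_simps)
      also have "\<dots> = \<epsilon> * (\<epsilon>^2 * real (card ?S))" by (simp add: power3_eq_cube power2_eq_square)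
      also have "\<dots> \<le> \<epsilon> * real (OPT_bpps d I s K)"
        using o epos by (intro mult_left_mono) auto
      finally show ?thesis .
    qed
    finally show ?thesis by simp
  qed
  have "val_bpps d I K ?P0 \<in> insert 0 ((\<lambda>k. card {B\<in>?P0. B \<inter> scen_items I K k \<noteq> {}}) ` {1..d})"
    unfolding val_bpps_def by (rule Max_in) auto
  then show ?thesis
  proof
    assume "val_bpps d I K ?P0 = 0"
    then show ?thesis using epos by simp
  next
    assume "val_bpps d I K ?P0 \<in> (\<lambda>k. card {B\<in>?P0. B \<inter> scen_items I K k \<noteq> {}}) ` {1..d}"
    then show ?thesis using bound by auto
  qed
qed

end
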